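(* There exists an absolute constant $C>0$ such that the following holds. Let $N\in\mathbb N\cup\{0\}$, $\kappa\in(0,1)$, and $\rho_0(r,\theta)=\sum_{\ell=0}^{2^N-1}\chi_{(\ell2^{-N},(\ell+1)2^{-N}]}(r)f^\ell(\theta)$ with each $f^\ell\in L^\infty$ $2\pi$-periodic and $\int_0^{2\pi}f^\ell=0$; let $\rho$ be the corresponding solution. Then for every integer $M>N$ and every $Q\in\mathcal Q_M$: (a) if $t\ge C\frac{2^M}{\kappa}$, then $\big|\fint_Q\rho(t,\cdot)\big|\le\frac\kappa4\|\rho(t,\cdot)\|_{L^\infty}$; (b) if $t\ge C2^{2M}$, then $\big|\fint_Q\rho(t,\cdot)\big|\le2^{-M}\|\rho(t,\cdot)\|_{L^\infty}$.
   Context: $B_1\subset\mathbb R^2$ open unit disk, polar coordinates $(r,\theta)$, $\chi_I$ indicator of $I$, $\fint_Q=\frac1{|Q|}\int_Q$. Velocity $u(r,\theta)=2\pi r^2(\sin\theta,-\cos\theta)$; $\rho(t,\cdot)$ solves $\partial_t\rho+\operatorname{div}(u\rho)=0$, $\rho(0)=\rho_0$, explicitly $\rho(t,r,\theta)=\rho_0(r,\theta+2\pi tr)$. Annular tiling: for $M\in\mathbb N$, $i=0,\dots,2^M-1$, $j=0,\dots,i$, $Q^M_{ij}=\{(r,\theta): r\in(i2^{-M},(i+1)2^{-M}],\ \theta\in 2\pi(\tfrac{j}{i+1},\tfrac{j+1}{i+1}]\}$; $\mathcal Q_M$ is the family of all $Q^M_{ij}$. *)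

theory Defs
  imports "HOL-Analysis.Analysis" "HOL-Probability.Essential_Supremum"
begin

text \<open>Points of the unit disk are represented in polar coordinates (r, theta),
  r in (0,1], theta in (0, 2 pi]. The area (Lebesgue) measure of the disk in
  these coordinates is r dr dtheta.\<close>

definition polar_disk :: "(real \<times> real) set" where
  "polar_disk = {0<..1} \<times> {0<..2*pi}"

definition disk_measure :: "(real \<times> real) measure" where
  "disk_measure = density lborel (\<lambda>p. ennreal (fst p) * indicator polar_disk p)"

definition rho0 :: "nat \<Rightarrow> (nat \<Rightarrow> real \<Rightarrow> real) \<Rightarrow> real \<Rightarrow> real \<Rightarrow> real" where
  "rho0 N f r \<theta> = (\<Sum>l<2^N. indicator {real l / 2^N <.. (real l + 1) / 2^N} r * f l \<theta>)"

text \<open>Explicit solution of the transport equation with velocity 2 pi r^2 (sin theta, - cos theta).\<close>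
definition rho_sol :: "nat \<Rightarrow> (nat \<Rightarrow> real \<Rightarrow> real) \<Rightarrow> real \<Rightarrow> real \<times> real \<Rightarrow> real" where
  "rho_sol N f t p = rho0 N f (fst p) (snd p + 2 * pi * t * fst p)"

definition Qcell :: "nat \<Rightarrow> nat \<Rightarrow> nat \<Rightarrow> (real \<times> real) set" where
  "Qcell M i j = {(r, \<theta>). real i / 2^M < r \<and> r \<le> (real i + 1) / 2^M \<and>
       2 * pi * (real j / (real i + 1)) < \<theta> \<and> \<theta> \<le> 2 * pi * ((real j + 1) / (real i + 1))}"

definition QM :: "nat \<Rightarrow> (real \<times> real) set set" where
  "QM M = {Qcell M i j | i j. i < 2^M \<and> j \<le> i}"

definition avg :: "(real \<times> real) set \<Rightarrow> (real \<times> real \<Rightarrow> real) \<Rightarrow> real" where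
  "avg Q g = (LINT p:Q|disk_measure. g p) / measure disk_measure Q"

definition Linf_disk :: "(real \<times> real \<Rightarrow> real) \<Rightarrow> ereal" where
  "Linf_disk g = esssup disk_measure (\<lambda>p. ereal \<bar>g p\<bar>)"

end

theory Submission
  imports Defs
begin

lemma shift_int:
  fixes g :: "real \<Rightarrow> real" and x y s :: real
  assumes "x \<le> y"
  shows "(LBINT z=x..y. g (z + s)) = (LBINT z=x+s..y+s. g z)"
proof -
  have "(LBINT z=x+s..y+s. g z) = (\<integral>z. indicator {x+s<..y+s} z *\<^sub>R g z \<partial>lborel)"
    using assms by (simp add: interval_integral_Ioc set_lebesgue_integral_def)
  also have "\<dots> = (\<integral>z. indicator {x+s<..y+s} (s + 1 * z) *\<^sub>R g (s + 1 * z) \<partial>lborel)"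
    using lborel_integral_real_affine[of 1 "\<lambda>z. indicator {x+s<..y+s} z *\<^sub>R g z" s] by simp
  also have "\<dots> = (\<integral>z. indicator {x<..y} z *\<^sub>R g (z + s) \<partial>lborel)"
    by (intro Bochner_Integration.integral_cong refl) (auto simp: indicator_def add.commute)
  also have "\<dots> = (LBINT z=x..y. g (z + s))"
    using assms by (simp add: interval_integral_Ioc set_lebesgue_integral_def)
  finally show ?thesis ..
qed

lemma loc_int:
  fixes g :: "real \<Rightarrow> real"
  assumes meas: "g \<in> borel_measurable lborel" and bd: "AE z in lborel. \<bar>g z\<bar> \<le> B"
  shows "set_integrable lborel {x..y} g"
proof -
  have i1: "integrable lborel (\<lambda>z. indicator {x..y} z *\<^sub>R \<bar>B\<bar>)"
    using borel_integrable_atLeastAtMost'[of x y "\<lambda>_. \<bar>B\<bar>"] unfolding set_integrable_def by auto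
  have i2: "(\<lambda>z. indicator {x..y} z *\<^sub>R g z) \<in> borel_measurable lborel"
    using meas by measurable
  have i3: "AE z in lborel. norm (indicator {x..y} z *\<^sub>R g z) \<le> norm (indicator {x..y} z *\<^sub>R \<bar>B\<bar>)"
    using bd by eventually_elim (auto split: split_indicator)
  show ?thesis unfolding set_integrable_def
    using Bochner_Integration.integrable_bound[OF i1 i2 i3] .
qed

lemma loc_int_interval:
  fixes g :: "real \<Rightarrow> real"
  assumes "\<And>x y. set_integrable lborel {x..y} g"
  shows "interval_lebesgue_integrable lborel (ereal x) (ereal y) g"
proof (cases "x \<le> y")
  case True
  then show ?thesis using set_integrable_subset[OF assms[of x y], of "{x<..<y}"] greaterThanLessThan_subseteq_atLeastAtMost_iff[of x y x y] by (auto simp: einterval_eq interval_lebesgue_integrable_def)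
next
  case False
  then show ?thesis using set_integrable_subset[OF assms[of y x], of "{y<..<x}"] greaterThanLessThan_subseteq_atLeastAtMost_iff[of y x y x] by (auto simp: einterval_eq interval_lebesgue_integrable_def)
qed

lemma int_bound_AE:
  fixes \<phi> :: "real \<Rightarrow> real" and a b K :: real
  assumes ab: "a \<le> b" and int: "set_integrable lborel {a..b} \<phi>"
    and bd: "AE z in lborel. z \<in> {a<..b} \<longrightarrow> \<bar>\<phi> z\<bar> \<le> K"
  shows "\<bar>LBINT z=a..b. \<phi> z\<bar> \<le> K * (b - a)"
proof -
  have int2: "set_integrable lborel {a<..b} \<phi>"
    by (rule set_integrable_subset[OF int]) auto
  have ii: "interval_lebesgue_integrable lborel (ereal a) (ereal b) \<phi>"
    using ab set_integrable_subset[OF int, of "{a<..<b}"] greaterThanLessThan_subseteq_atLeastAtMost_iff[of a b a b]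
    by (simp add: interval_lebesgue_integrable_def einterval_eq)
  have "\<bar>LBINT z=a..b. \<phi> z\<bar> \<le> (LBINT z=a..b. norm (\<phi> z))"
    using interval_integral_norm[OF ii] ab by simp
  also have "\<dots> = (LBINT z:{a<..b}. \<bar>\<phi> z\<bar>)"
    using ab by (simp add: interval_integral_Ioc)
  also have "\<dots> \<le> (LBINT z:{a<..b}. K)"
  proof (rule set_integral_mono_AE)
    show "set_integrable lborel {a<..b} (\<lambda>z. \<bar>\<phi> z\<bar>)"
      using int2 by (simp add: set_integrable_abs)
    show "set_integrable lborel {a<..b} (\<lambda>z. K)"
      by (rule set_integrable_subset[OF borel_integrable_atLeastAtMost'[of a b "\<lambda>_. K"]]) auto
    show "AE z\<in>{a<..b} in lborel. \<bar>\<phi> z\<bar> \<le> K" using bd by simp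
  qed
  also have "\<dots> = K * (b - a)"
    using ab interval_integral_const(2)[of a b K] interval_integral_Ioc[of a b "\<lambda>_. K"] by simp
  finally show ?thesis .
qed

lemma sum_real:
  fixes g :: "real \<Rightarrow> real" and a b c :: real
  assumes li: "\<And>x y. set_integrable lborel {x..y} g"
  shows "(LBINT z=a..b. g z) + (LBINT z=b..c. g z) = (LBINT z=a..c. g z)"
proof (rule interval_integral_sum)
  have e: "min (ereal a) (min (ereal b) (ereal c)) = ereal (min a (min b c))"
       "max (ereal a) (max (ereal b) (ereal c)) = ereal (max a (max b c))"
    by (auto simp: min_def max_def)
  show "interval_lebesgue_integrable lborel (min (ereal a) (min (ereal b) (ereal c)))
     (max (ereal a) (max (ereal b) (ereal c))) g"
    unfolding e by (rule loc_int_interval[OF li])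
qed

context
  fixes g :: "real \<Rightarrow> real"
  assumes per: "\<And>x. g (x + 2*pi) = g x"
    and li: "\<And>x y. set_integrable lborel {x..y} g"
begin

lemma per_nat: "g (x + 2*pi*real n) = g x"
proof (induction n arbitrary: x)
  case 0 then show ?case by simp
next
  case (Suc n)
  have "g (x + 2*pi*real (Suc n)) = g ((x + 2*pi*real n) + 2*pi)" by (simp add: algebra_simps)
  then show ?case using per Suc by simp
qed

lemma per_int: "g (x + 2*pi*real_of_int k) = g x"
proof (cases "k \<ge> 0")
  case True
  then show ?thesis using per_nat[of x "nat k"] by simp
next
  case False
  then have "g x = g ((x + 2*pi*real_of_int k) + 2*pi*real (nat (-k)))" by simp
  then show ?thesis using per_nat by simp
qed

lemma period_integral: fixes c :: real shows "(LBINT z=c..c+2*pi. g z) = (LBINT z=0..2*pi. g z)"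
proof -
  define n where "n = \<lfloor>c/(2*pi)\<rfloor>"
  define y where "y = c - 2*pi*real_of_int n"
  have n1: "real_of_int n \<le> c/(2*pi)" "c/(2*pi) < real_of_int n + 1"
    unfolding n_def by linarith+
  have y0: "0 \<le> y" "y < 2*pi"
    using n1 pi_gt_zero unfolding y_def by (simp_all add: field_simps)
  have "(LBINT z=c..c+2*pi. g z) = (LBINT z=y+2*pi*real_of_int n..(y+2*pi)+2*pi*real_of_int n. g z)"
    by (simp add: y_def)
  also have "\<dots> = (LBINT z=y..y+2*pi. g (z + 2*pi*real_of_int n))"
    by (rule shift_int[symmetric]) simp
  also have "\<dots> = (LBINT z=y..y+2*pi. g z)"
    by (simp add: per_int)
  also have "\<dots> = (LBINT z=y..2*pi. g z) + (LBINT z=2*pi..y+2*pi. g z)"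
    by (rule sum_real[OF li, symmetric])
  also have "(LBINT z=2*pi..y+2*pi. g z) = (LBINT z=0..y. g (z + 2*pi))"
    using shift_int[of 0 y g "2*pi"] y0 by (simp add: zero_ereal_def)
  also have "\<dots> = (LBINT z=0..y. g z)" by (simp add: per)
  also have "(LBINT z=y..2*pi. g z) + (LBINT z=0..y. g z) = (LBINT z=0..2*pi. g z)"
    using sum_real[OF li, of 0 y "2*pi"] by (simp add: zero_ereal_def add.commute)
  finally show ?thesis .
qed

end


definition Fint :: "(real \<Rightarrow> real) \<Rightarrow> real \<Rightarrow> real" where
  "Fint g x = (LBINT z=0..x. g z)"

lemma deriv_G:
  fixes F :: "real \<Rightarrow> real"
  assumes cont: "continuous_on UNIV F"
  shows "((\<lambda>u. LBINT y=(0::real)..u. F y) has_field_derivative F x) (at x)"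
proof -
  define a where "a = min 0 (x-1)"
  define b where "b = max 0 (x+1)"
  have c1: "continuous_on {a..b} F" by (rule continuous_on_subset[OF cont]) simp
  have "((\<lambda>u. LBINT y=(0::real)..u. F y) has_vector_derivative (F x)) (at x within {a..b})"
    by (rule interval_integral_FTC2[OF _ _ c1]) (simp_all add: a_def b_def)
  then have "((\<lambda>u. LBINT y=(0::real)..u. F y) has_vector_derivative (F x)) (at x within {a<..<b})"
    by (rule has_vector_derivative_within_subset) auto
  moreover have "x \<in> {a<..<b}" by (auto simp: a_def b_def)
  ultimately have "((\<lambda>u. LBINT y=(0::real)..u. F y) has_vector_derivative (F x)) (at x)"
    using at_within_open[of x "{a<..<b}"] by simp
  then show ?thesis by (simp add: has_real_derivative_iff_has_vector_derivative)
qed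

lemma r_integral_bound:
  fixes F :: "real \<Rightarrow> real" and r1 r2 t h P a :: real
  assumes cont: "continuous_on UNIV F" and Fb: "\<And>x. \<bar>F x\<bar> \<le> P"
    and t: "t > 0" and r: "0 \<le> r1" "r1 \<le> r2" and h: "h \<ge> 0"
  shows "\<bar>LBINT r=r1..r2. r * (F (a + h + 2*pi*t*r) - F (a + 2*pi*t*r))\<bar> \<le> 2*r2*h*P/(pi*t)"
proof -
  define G where "G (u::real) = (LBINT y=(0::real)..u. F y)" for u
  have P0: "0 \<le> P" using Fb[of 0] by simp
  have li: "\<And>x y. set_integrable lborel {x..y} F"
    by (rule borel_integrable_atLeastAtMost') (auto intro: continuous_on_subset[OF cont])
  have dG: "(G has_field_derivative F x) (at x)" for x
    unfolding G_def by (rule deriv_G[OF cont])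
  define E where "E x = G (x + h) - G x - G h" for x
  have dE: "(E has_field_derivative (F (x+h) - F x)) (at x)" for x
  proof -
    have "((\<lambda>z. G (z + h)) has_real_derivative F (x+h) * 1) (at x)"
      by (rule DERIV_chain2[OF dG]) (auto intro!: derivative_eq_intros)
    then show ?thesis unfolding E_def by (auto intro!: derivative_eq_intros dG)
  qed
  have Gdiff: "\<bar>G (x + h) - G x\<bar> \<le> P * h" for x
  proof -
    have "G (x + h) - G x = (LBINT y=x..x+h. F y)"
      unfolding G_def using sum_real[OF li, of 0 x "x+h"] by (simp add: zero_ereal_def)
    also have "\<bar>\<dots>\<bar> \<le> P * ((x + h) - x)"
      by (rule int_bound_AE) (use h li Fb in auto)
    finally show ?thesis by simp
  qed
  have Eb: "\<bar>E x\<bar> \<le> 2 * h * P" for x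
  proof -
    have e: "2*h*P = P*h + P*h" by (simp add: algebra_simps)
    have g0: "G 0 = 0" by (simp add: G_def zero_ereal_def)
    show ?thesis using Gdiff[of x] Gdiff[of 0] e g0 unfolding E_def
      by (simp only: add_0_left abs_le_iff) linarith
  qed
  define \<phi> where "\<phi> r = E (a + 2*pi*t*r) / (2*pi*t)" for r
  have d\<phi>: "(\<phi> has_field_derivative (F (a + h + 2*pi*t*r) - F (a + 2*pi*t*r))) (at r)" for r
  proof -
    have "((\<lambda>r. E (a + 2*pi*t*r)) has_field_derivative
        (F (a + 2*pi*t*r + h) - F (a + 2*pi*t*r)) * (2*pi*t)) (at r)"
      by (rule DERIV_chain2[OF dE]) (auto intro!: derivative_eq_intros)
    then show ?thesis unfolding \<phi>_def using t
      by (auto intro!: derivative_eq_intros simp: field_simps add_ac)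
  qed
  have cE: "continuous_on UNIV E"
    by (metis dE DERIV_isCont continuous_at_imp_continuous_on)
  have c\<phi>: "continuous_on UNIV \<phi>"
    by (metis d\<phi> DERIV_isCont continuous_at_imp_continuous_on)
  have \<phi>b: "\<bar>\<phi> r\<bar> \<le> h * P / (pi * t)" for r
    using Eb[of "a + 2*pi*t*r"] t unfolding \<phi>_def by (simp add: field_simps abs_divide)
  define D where "D r = F (a + h + 2*pi*t*r) - F (a + 2*pi*t*r)" for r
  have cD: "continuous_on UNIV (\<lambda>r. r * D r)"
    unfolding D_def
    by (intro continuous_intros continuous_on_compose2[OF cont]) auto
  have dpsi: "((\<lambda>r. r * \<phi> r) has_vector_derivative (\<phi> r + r * D r)) (at r within X)" for r X
    unfolding has_real_derivative_iff_has_vector_derivative[symmetric] D_def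
    by (auto intro!: derivative_eq_intros d\<phi>[THEN DERIV_subset] simp: algebra_simps)
  have i1: "interval_lebesgue_integrable lborel (ereal r1) (ereal r2) \<phi>"
    using r by (intro interval_integrable_continuous_on continuous_on_subset[OF c\<phi>]) auto
  have i2: "interval_lebesgue_integrable lborel (ereal r1) (ereal r2) (\<lambda>r. r * D r)"
    using r by (intro interval_integrable_continuous_on continuous_on_subset[OF cD]) auto
  have "(LBINT r=r1..r2. \<phi> r + r * D r) = r2 * \<phi> r2 - r1 * \<phi> r1"
    by (rule interval_integral_FTC_finite)
      (auto intro!: continuous_intros continuous_on_subset[OF c\<phi>] continuous_on_subset[OF cD] dpsi)
  then have eq: "(LBINT r=r1..r2. r * D r) = r2 * \<phi> r2 - r1 * \<phi> r1 - (LBINT r=r1..r2. \<phi> r)"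
    using interval_lebesgue_integral_add(2)[OF i1 i2] by simp
  have b3: "\<bar>LBINT r=r1..r2. \<phi> r\<bar> \<le> h * P / (pi * t) * (r2 - r1)"
    by (rule int_bound_AE) (use r \<phi>b in \<open>auto intro: borel_integrable_atLeastAtMost' continuous_on_subset[OF c\<phi>]\<close>)
  have b1: "\<bar>r2 * \<phi> r2\<bar> \<le> r2 * (h * P / (pi * t))"
  proof -
    have "r2 * \<bar>\<phi> r2\<bar> \<le> r2 * (h * P / (pi * t))" by (rule mult_left_mono[OF \<phi>b]) (use r in auto)
    then show ?thesis using r by (simp only: abs_mult abs_of_nonneg)
  qed
  have b2: "\<bar>r1 * \<phi> r1\<bar> \<le> r1 * (h * P / (pi * t))"
  proof -
    have "r1 * \<bar>\<phi> r1\<bar> \<le> r1 * (h * P / (pi * t))" by (rule mult_left_mono[OF \<phi>b]) (use r in auto)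
    then show ?thesis using r by (simp only: abs_mult abs_of_nonneg)
  qed
  have "\<bar>LBINT r=r1..r2. r * D r\<bar> \<le> r2 * (h * P / (pi * t)) + r1 * (h * P / (pi * t)) + h * P / (pi * t) * (r2 - r1)"
    unfolding eq using b1 b2 b3 by linarith
  also have "\<dots> = 2*r2*h*P/(pi*t)" using t by (simp add: field_simps)
  finally show ?thesis unfolding D_def .
qed


lemma interval_nonneg:
  fixes g :: "real \<Rightarrow> real" and x y :: real
  assumes "x \<le> y" "\<And>z. 0 \<le> g z"
  shows "0 \<le> (LBINT z=x..y. g z)"
  using assms by (simp add: interval_integral_Ioc set_lebesgue_integral_def integral_nonneg)

context
  fixes g :: "real \<Rightarrow> real" and B :: real
  assumes meas: "g \<in> borel_measurable lborel"
    and bd: "AE z in lborel. \<bar>g z\<bar> \<le> B"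
    and per: "\<And>x. g (x + 2*pi) = g x"
    and mean: "(LBINT z=0..2*pi. g z) = 0"
begin

lemma li_g: "set_integrable lborel {x..y} g"
  by (rule loc_int[OF meas bd])

lemma li_abs: "set_integrable lborel {x..y} (\<lambda>z. \<bar>g z\<bar>)"
  by (rule set_integrable_abs[OF li_g])

lemma F_diff: "Fint g y - Fint g x = (LBINT z=x..y. g z)"
  using sum_real[OF li_g, of 0 x y] unfolding Fint_def by (simp add: zero_ereal_def)

lemma F_lip1: "x \<le> y \<Longrightarrow> \<bar>Fint g y - Fint g x\<bar> \<le> B * (y - x)"
  unfolding F_diff by (rule int_bound_AE[OF _ li_g]) (use bd in auto)

lemma F_lip: "dist (Fint g x) (Fint g y) \<le> \<bar>B\<bar> * dist x y"
proof (cases "x \<le> y")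
  case True
  then show ?thesis using F_lip1[of x y] by (simp add: dist_real_def abs_minus_commute)
      (smt (verit, best) abs_ge_self mult_right_mono)
next
  case False
  then show ?thesis using F_lip1[of y x] by (simp add: dist_real_def abs_minus_commute)
      (smt (verit, best) abs_ge_self mult_right_mono)
qed

lemma F_cont: "continuous_on UNIV (Fint g)"
  by (rule lipschitz_on_continuous_on[of "\<bar>B\<bar>"], rule lipschitz_onI) (use F_lip in auto)

lemma F_per: "Fint g (x + 2*pi) = Fint g x"
proof -
  have "Fint g (x + 2*pi) - Fint g x = (LBINT z=x..x+2*pi. g z)" by (rule F_diff)
  also have "\<dots> = 0" using period_integral[OF per li_g] mean by simp
  finally show ?thesis by simp
qed

lemma F_li: "set_integrable lborel {x..y} (Fint g)"
  by (rule borel_integrable_atLeastAtMost') (auto intro: continuous_on_subset[OF F_cont])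

lemma F_bound: "\<bar>Fint g x\<bar> \<le> (LBINT z=0..2*pi. \<bar>g z\<bar>)"
proof -
  define n where "n = \<lfloor>x/(2*pi)\<rfloor>"
  define y where "y = x - 2*pi*real_of_int n"
  have n1: "real_of_int n \<le> x/(2*pi)" "x/(2*pi) < real_of_int n + 1"
    unfolding n_def by linarith+
  have y0: "0 \<le> y" "y < 2*pi"
    using n1 pi_gt_zero unfolding y_def by (simp_all add: field_simps)
  have "Fint g x = Fint g (y + 2*pi*real_of_int n)" by (simp add: y_def)
  also have "\<dots> = Fint g y" by (rule per_int[OF F_per F_li])
  finally have "Fint g x = Fint g y" .
  moreover have "\<bar>Fint g y\<bar> \<le> (LBINT z=0..y. \<bar>g z\<bar>)"
    unfolding Fint_def
    using interval_integral_norm[OF loc_int_interval[OF li_g, of 0 y]] y0 by (simp add: zero_ereal_def)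
  moreover have "(LBINT z=0..y. \<bar>g z\<bar>) \<le> (LBINT z=0..2*pi. \<bar>g z\<bar>)"
  proof -
    have "(LBINT z=0..y. \<bar>g z\<bar>) + (LBINT z=y..2*pi. \<bar>g z\<bar>) = (LBINT z=0..2*pi. \<bar>g z\<bar>)"
      using sum_real[OF li_abs, of 0 y "2*pi"] by (simp add: zero_ereal_def)
    moreover have "0 \<le> (LBINT z=y..2*pi. \<bar>g z\<bar>)" by (rule interval_nonneg) (use y0 in auto)
    ultimately show ?thesis by linarith
  qed
  ultimately show ?thesis by linarith
qed

end


definition dd :: "real \<times> real \<Rightarrow> real" where
  "dd p = fst p * indicator polar_disk p"

lemma polar_disk_borel2[measurable]: "polar_disk \<in> sets (borel \<Otimes>\<^sub>M borel)"
  unfolding polar_disk_def by auto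

lemma dd_meas2[measurable]: "dd \<in> borel_measurable (borel \<Otimes>\<^sub>M borel)"
  unfolding dd_def by measurable

lemma to_lborel: "f \<in> borel_measurable (borel \<Otimes>\<^sub>M borel) \<Longrightarrow> f \<in> borel_measurable (lborel :: (real \<times> real) measure)"
  unfolding borel_prod by simp

lemma dd_meas: "dd \<in> borel_measurable borel"
  using dd_meas2 unfolding borel_prod .

lemma dd_nonneg: "0 \<le> dd p"
  by (auto simp: dd_def polar_disk_def split: split_indicator)

lemma dens_eq: "disk_measure = density lborel (\<lambda>p. ennreal (dd p))"
  unfolding disk_measure_def
proof (intro density_cong)
  show "(\<lambda>p. ennreal (fst p) * indicator polar_disk p) \<in> borel_measurable lborel"
    by (rule to_lborel) measurable
  show "(\<lambda>p. ennreal (dd p)) \<in> borel_measurable lborel"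
    by (rule to_lborel) measurable
qed (auto simp: dd_def polar_disk_def split: split_indicator)

lemma sets_disk[measurable_cong]: "sets disk_measure = sets (borel \<Otimes>\<^sub>M borel)"
  unfolding dens_eq borel_prod by simp

lemma space_disk: "space disk_measure = UNIV"
  unfolding dens_eq by simp

lemma integrable_disk_iff:
  fixes f :: "real \<times> real \<Rightarrow> real"
  assumes f: "f \<in> borel_measurable (borel \<Otimes>\<^sub>M borel)"
  shows "integrable disk_measure f \<longleftrightarrow> integrable lborel (\<lambda>p. dd p * f p)"
  unfolding dens_eq using f dd_meas unfolding borel_prod by (subst integrable_density) (auto simp: dd_nonneg)

lemma integral_disk:
  fixes f :: "real \<times> real \<Rightarrow> real"
  assumes f: "f \<in> borel_measurable (borel \<Otimes>\<^sub>M borel)"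
  shows "integral\<^sup>L disk_measure f = (\<integral>p. dd p * f p \<partial>lborel)"
  unfolding dens_eq using f dd_meas unfolding borel_prod by (subst integral_density) (auto simp: dd_nonneg)

lemma int_ind:
  assumes S: "S \<subseteq> polar_disk" "S \<in> sets (borel \<Otimes>\<^sub>M borel)"
  shows "integrable disk_measure (indicator S :: _ \<Rightarrow> real)"
proof -
  have box: "polar_disk \<subseteq> cbox (0,0) (1, 2*pi)"
    by (auto simp: polar_disk_def cbox_Pair_eq)
  have i1: "integrable lborel (indicator (cbox (0::real,0::real) (1, 2*pi)) :: _ \<Rightarrow> real)"
    by (rule integrable_real_indicator) (simp, rule emeasure_lborel_cbox_finite)
  have "integrable lborel (\<lambda>p. dd p * indicator S p)"
  proof (rule Bochner_Integration.integrable_bound[OF i1])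
    show "(\<lambda>p. dd p * indicator S p) \<in> borel_measurable lborel"
      apply (rule to_lborel) using S(2) by measurable
    show "AE x in lborel. norm (dd x * indicator S x) \<le> norm (indicator (cbox (0::real,0::real) (1, 2*pi)) x :: real)"
      using S box by (intro AE_I2) (auto simp: dd_def polar_disk_def split: split_indicator)
  qed
  then show ?thesis using S by (subst integrable_disk_iff) auto
qed

lemma rect_formula:
  fixes g :: "real \<times> real \<Rightarrow> real" and A C :: "real set"
  assumes [measurable]: "A \<in> sets borel" "C \<in> sets borel" "g \<in> borel_measurable (borel \<Otimes>\<^sub>M borel)"
    and sub: "A \<times> C \<subseteq> polar_disk"
    and int: "integrable disk_measure (\<lambda>p. indicator (A \<times> C) p * g p)"
  shows "(LINT p:A \<times> C|disk_measure. g p) =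
     (\<integral>r. indicator A r * r * (\<integral>\<theta>. indicator C \<theta> * g (r, \<theta>) \<partial>lborel) \<partial>lborel)"
proof -
  define h where "h p = indicator A (fst p) * fst p * (indicator C (snd p) * g p)" for p
  have hp: "dd p * (indicator (A \<times> C) p * g p) = h p" for p
    using sub by (auto simp: dd_def h_def indicator_times split: split_indicator)
  have "(LINT p:A \<times> C|disk_measure. g p) = (\<integral>p. dd p * (indicator (A \<times> C) p * g p) \<partial>lborel)"
      unfolding set_lebesgue_integral_def by (subst integral_disk) auto
  also have "\<dots> = integral\<^sup>L lborel h" by (simp add: hp)
  finally have e1: "(LINT p:A \<times> C|disk_measure. g p) = integral\<^sup>L lborel h" .
  have ih: "integrable lborel h"
    using int by (subst (asm) integrable_disk_iff) (auto simp: hp)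
  have ih2: "integrable (lborel \<Otimes>\<^sub>M lborel) h" using ih by (simp add: lborel_prod)
  have "integral\<^sup>L lborel h = integral\<^sup>L (lborel \<Otimes>\<^sub>M lborel) h" by (simp add: lborel_prod)
  also have "\<dots> = (\<integral>r. (\<integral>\<theta>. h (r, \<theta>) \<partial>lborel) \<partial>lborel)"
    by (rule lborel_pair.integral_fst'[OF ih2, symmetric])
  also have "\<dots> = (\<integral>r. indicator A r * r * (\<integral>\<theta>. indicator C \<theta> * g (r, \<theta>) \<partial>lborel) \<partial>lborel)"
    unfolding h_def by simp
  finally show ?thesis using e1 by simp
qed


lemma Ioc_integral:
  fixes \<phi> :: "real \<Rightarrow> real" and r1 r2 :: real
  assumes "r1 \<le> r2"
  shows "(\<integral>r. indicator {r1<..r2} r * \<phi> r \<partial>lborel) = (LBINT r=r1..r2. \<phi> r)"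
  using assms by (simp add: interval_integral_Ioc set_lebesgue_integral_def)

lemma int_r:
  fixes r1 r2 :: real
  assumes "r1 \<le> r2"
  shows "(LBINT r=r1..r2. r) = (r2^2 - r1^2)/2"
proof -
  have "(LBINT r=r1..r2. r) = r2^2/2 - r1^2/2"
    by (rule interval_integral_FTC_finite[where F="\<lambda>r. r^2/2"])
      (auto intro!: continuous_intros derivative_eq_intros simp: has_real_derivative_iff_has_vector_derivative[symmetric])
  then show ?thesis by simp
qed

lemma rho_eq:
  fixes N M i :: nat and r x :: real
  assumes NM: "N < M" and i: "i < 2^M"
    and r: "real i / 2^M < r" "r \<le> (real i + 1) / 2^M"
  shows "rho0 N f r x = f (i div 2^(M-N)) x" and "i div 2^(M-N) < 2^N"
proof -
  define k :: nat where "k = 2^(M-N)"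
  define l0 where "l0 = i div k"
  have k0: "k > 0" by (simp add: k_def)
  have Mk: "(2::nat)^M = 2^N * k" unfolding k_def using NM by (simp add: power_add[symmetric])
  have Mkr: "(2::real)^M = 2^N * real k"
    using arg_cong[OF Mk, of real] by simp
  show l0N: "i div 2^(M-N) < 2^N"
    using i Mk k0 by (simp add: k_def[symmetric] less_mult_imp_div_less mult.commute)
  have lk1: "l0 * k \<le> i" unfolding l0_def by simp
  have lk2: "i + 1 \<le> (l0 + 1) * k"
    unfolding l0_def using k0
    by (metis Suc_eq_plus1 Suc_leI dividend_less_div_times mult.commute add.commute mult_Suc_right)
  have X1: "real i < r * 2^M" "r * 2^M \<le> real i + 1"
    using r by (simp_all add: field_simps)
  have ind: "indicator {real l / 2^N <.. (real l + 1) / 2^N} r = (if l = l0 then 1 else (0::real))" for l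
  proof -
    have e2: "r * 2^M = real k * (r * 2^N)" by (simp add: Mkr)
    have kr: "0 < real k" using k0 by simp
    have e3: "real (l*k) < r * 2^M \<longleftrightarrow> real l < r * 2^N"
      unfolding e2 of_nat_mult using mult_less_cancel_left_pos[OF kr, of "real l" "r * 2^N"]
      by (simp add: mult.commute)
    have e4: "r * 2^M \<le> real ((l+1)*k) \<longleftrightarrow> r * 2^N \<le> real l + 1"
      unfolding e2 of_nat_mult using mult_le_cancel_left_pos[OF kr, of "r * 2^N" "real l + 1"]
      by (simp add: mult.commute add.commute)
    have eq: "r \<in> {real l / 2^N <.. (real l + 1) / 2^N} \<longleftrightarrow> real (l*k) < r * 2^M \<and> r * 2^M \<le> real ((l+1)*k)"
      unfolding e3 e4 by (simp add: field_simps)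
    have "r \<in> {real l / 2^N <.. (real l + 1) / 2^N} \<longleftrightarrow> l = l0"
    proof
      assume "l = l0"
      then show "r \<in> {real l / 2^N <.. (real l + 1) / 2^N}"
        unfolding eq using X1 lk1 lk2
        by (smt (verit, ccfv_threshold) of_nat_1 of_nat_add of_nat_le_iff)
    next
      assume A: "r \<in> {real l / 2^N <.. (real l + 1) / 2^N}"
      show "l = l0"
      proof (rule ccontr)
        assume "l \<noteq> l0"
        then consider "l < l0" | "l0 < l" by linarith
        then show False
        proof cases
          case 1
          then have "(l+1)*k \<le> l0*k" by (intro mult_right_mono) auto
          then show False using A lk1 X1 unfolding eq
            by (smt (verit) of_nat_le_iff)
        next
          case 2
          then have "(l0+1)*k \<le> l*k" by (intro mult_right_mono) auto
          then show False using A lk2 X1 unfolding eq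
            by (smt (verit) of_nat_1 of_nat_add of_nat_le_iff)
        qed
      qed
    qed
    then show ?thesis by (simp add: indicator_def)
  qed
  have "rho0 N f r x = (\<Sum>l<2^N. (if l = l0 then f l x else 0))"
    unfolding rho0_def by (intro sum.cong refl) (simp add: ind)
  also have "\<dots> = f l0 x" using l0N by (simp add: l0_def k_def)
  finally show "rho0 N f r x = f (i div 2^(M-N)) x" by (simp add: l0_def k_def)
qed


lemma main_bound:
  fixes N M i j :: nat and f :: "nat \<Rightarrow> real \<Rightarrow> real" and t L :: real
  assumes NM: "N < M" and i: "i < 2^M" and j: "j \<le> i" and t: "t > 0"
    and hf: "\<forall>l<2^N. f l \<in> borel_measurable lborel \<and>
               (\<exists>B. AE \<theta> in lborel. \<bar>f l \<theta>\<bar> \<le> B) \<and>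
               (\<forall>\<theta>. f l (\<theta> + 2*pi) = f l \<theta>) \<and>
               (LBINT \<theta>=0..2*pi. f l \<theta>) = 0"
    and Lf: "AE p in disk_measure. \<bar>rho_sol N f t p\<bar> \<le> L"
  shows "0 \<le> L \<and> \<bar>avg (Qcell M i j) (rho_sol N f t)\<bar> \<le> 8 * L * 2^M / t"
proof -
  define \<rho> where "\<rho> = rho_sol N f t"
  define l0 where "l0 = i div 2^(M-N)"
  define g where "g = f l0"
  define r1 :: real where "r1 = real i / 2^M"
  define r2 :: real where "r2 = (real i + 1) / 2^M"
  define a :: real where "a = 2 * pi * (real j / (real i + 1))"
  define b :: real where "b = 2 * pi * ((real j + 1) / (real i + 1))"
  define h :: real where "h = 2 * pi / (real i + 1)"
  have M0: "(0::real) < 2^M" by simp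
  have r12: "0 \<le> r1" "r1 < r2" "r2 \<le> 1"
    using i M0 by (auto simp: r1_def r2_def divide_right_mono field_simps)
      (metis Suc_leI of_nat_Suc of_nat_le_iff of_nat_numeral of_nat_power)
  have ab: "0 \<le> a" "a < b" "b \<le> 2*pi" "b = a + h"
  proof -
    have p: "0 < real i + 1" by simp
    show "0 \<le> a" by (simp add: a_def)
    show "b = a + h" unfolding a_def b_def h_def
      by (simp add: add_divide_distrib distrib_left)
    then show "a < b" by (simp add: h_def)
    have "(real j + 1) / (real i + 1) \<le> 1" using j p by (simp add: divide_le_eq_1)
    then show "b \<le> 2*pi" unfolding b_def using mult_left_mono[of _ 1 "2*pi"] by (simp del: times_divide_eq_right)
  qed
  have l0N: "l0 < 2^N" using rho_eq(2)[OF NM i, of r2] r12 unfolding l0_def r1_def r2_def by simp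
  have hg: "g \<in> borel_measurable lborel" "\<exists>B. AE \<theta> in lborel. \<bar>g \<theta>\<bar> \<le> B"
      "\<And>\<theta>. g (\<theta> + 2*pi) = g \<theta>" "(LBINT \<theta>=0..2*pi. g \<theta>) = 0"
    using hf l0N unfolding g_def by auto
  obtain B where gB: "AE \<theta> in lborel. \<bar>g \<theta>\<bar> \<le> B" using hg(2) by blast
  note gm = hg(1) and gper = hg(3) and gmean = hg(4)
  have rho_r: "\<rho> (r, \<theta>) = g (\<theta> + 2*pi*t*r)" if "r \<in> {r1<..r2}" for r \<theta>
    using rho_eq(1)[OF NM i, of r f "\<theta> + 2*pi*t*r"] that
    unfolding \<rho>_def rho_sol_def g_def l0_def r1_def r2_def by (simp add: mult_ac)
  have fm: "f l \<in> borel_measurable borel" if "l < 2^N" for l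
    using hf that by auto
  have \<rho>m[measurable]: "\<rho> \<in> borel_measurable (borel \<Otimes>\<^sub>M borel)"
  proof -
    have "(\<lambda>p. \<Sum>l<2^N. indicator {real l / 2^N <.. (real l + 1) / 2^N} (fst p) * f l (snd p + 2 * pi * t * fst p))
       \<in> borel_measurable (borel \<Otimes>\<^sub>M borel)"
    proof (rule borel_measurable_sum)
      fix l assume l: "l \<in> {..<(2::nat)^N}"
      have "(\<lambda>p. f l (snd p + 2 * pi * t * fst p)) \<in> borel_measurable (borel \<Otimes>\<^sub>M borel)"
        by (rule measurable_compose[OF _ fm]) (use l in auto)
      then show "(\<lambda>p. indicator {real l / 2^N <.. (real l + 1) / 2^N} (fst p) * f l (snd p + 2 * pi * t * fst p))
       \<in> borel_measurable (borel \<Otimes>\<^sub>M borel)" by measurable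
    qed
    then show ?thesis unfolding \<rho>_def rho_sol_def rho0_def by simp
  qed
  have intX: "integrable disk_measure (\<lambda>p. indicator X p * \<rho> p)"
    "integrable disk_measure (\<lambda>p. indicator X p * \<bar>\<rho> p\<bar>)"
    "integrable disk_measure (\<lambda>p. indicator X p * (c::real))"
    if X: "X \<subseteq> polar_disk" "X \<in> sets (borel \<Otimes>\<^sub>M borel)" for X c
  proof -
    have ii: "integrable disk_measure (indicator X :: _ \<Rightarrow> real)" by (rule int_ind[OF X])
    have iL: "integrable disk_measure (\<lambda>p. \<bar>L\<bar> * indicator X p)" using ii by simp
    show "integrable disk_measure (\<lambda>p. indicator X p * c)" by (rule integrable_mult_left[OF ii])
    show "integrable disk_measure (\<lambda>p. indicator X p * \<rho> p)"
    proof (rule Bochner_Integration.integrable_bound[OF iL])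
      show "(\<lambda>p. indicator X p * \<rho> p) \<in> borel_measurable disk_measure" using X(2) by measurable
      show "AE x in disk_measure. norm (indicator X x * \<rho> x) \<le> norm (\<bar>L\<bar> * indicator X x)"
        using Lf unfolding \<rho>_def by eventually_elim (auto split: split_indicator)
    qed
    show "integrable disk_measure (\<lambda>p. indicator X p * \<bar>\<rho> p\<bar>)"
    proof (rule Bochner_Integration.integrable_bound[OF iL])
      show "(\<lambda>p. indicator X p * \<bar>\<rho> p\<bar>) \<in> borel_measurable disk_measure" using X(2) by measurable
      show "AE x in disk_measure. norm (indicator X x * \<bar>\<rho> x\<bar>) \<le> norm (\<bar>L\<bar> * indicator X x)"
        using Lf unfolding \<rho>_def by eventually_elim (auto split: split_indicator)
    qed
  qed
  define Q where "Q = Qcell M i j"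
  have Qeq: "Q = {r1<..r2} \<times> {a<..b}"
    unfolding Q_def Qcell_def r1_def r2_def a_def b_def by auto
  define S where "S = {r1<..r2} \<times> {0<..2*pi}"
  have Qsub: "Q \<subseteq> polar_disk" unfolding Qeq polar_disk_def using r12 ab by auto
  have Ssub: "S \<subseteq> polar_disk" unfolding S_def polar_disk_def using r12 by auto
  have Qm: "Q \<in> sets (borel \<Otimes>\<^sub>M borel)" unfolding Qeq by auto
  have Sm: "S \<in> sets (borel \<Otimes>\<^sub>M borel)" unfolding S_def by auto
  define P where "P = (LBINT z=0..2*pi. \<bar>g z\<bar>)"
  have li_a: "\<And>x y. set_integrable lborel {x..y} (\<lambda>z. \<bar>g z\<bar>)"
    by (rule li_abs[OF gm gB gper gmean])
  have per_a: "\<And>x. \<bar>g (x + 2*pi)\<bar> = \<bar>g x\<bar>" using gper by simp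
  have Pshift: "(LBINT \<theta>=0..2*pi. \<bar>g (\<theta> + c)\<bar>) = P" for c
  proof -
    have "(LBINT \<theta>=0..2*pi. \<bar>g (\<theta> + c)\<bar>) = (LBINT z=0+c..2*pi+c. \<bar>g z\<bar>)"
      using shift_int[of 0 "2*pi" "\<lambda>z. \<bar>g z\<bar>" c] by (simp add: zero_ereal_def)
    also have "\<dots> = (LBINT z=c..c+2*pi. \<bar>g z\<bar>)" by (simp add: add.commute)
    also have "\<dots> = P" unfolding P_def
      using period_integral[of "\<lambda>z. \<bar>g z\<bar>", OF per_a li_a, of c] by simp
    finally show ?thesis .
  qed
  define D where "D = (r2^2 - r1^2)/2"
  have D0: "D > 0" unfolding D_def using r12 by (simp add: power_strict_mono)
  have intr: "(\<integral>r. indicator {r1<..r2} r * r * K \<partial>lborel) = K * D" for K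
  proof -
    have "(\<integral>r. indicator {r1<..r2} r * r * K \<partial>lborel) = (\<integral>r. indicator {r1<..r2} r * (r * K) \<partial>lborel)"
      by (simp add: mult_ac)
    also have "\<dots> = (LBINT r=r1..r2. r * K)" using r12 by (simp add: Ioc_integral)
    also have "\<dots> = K * D" using int_r[of r1 r2] r12 by (simp add: D_def mult.commute)
    finally show ?thesis .
  qed
  have S_abs: "(LINT p:S|disk_measure. \<bar>\<rho> p\<bar>) = P * D"
  proof -
    have "(LINT p:S|disk_measure. \<bar>\<rho> p\<bar>) =
      (\<integral>r. indicator {r1<..r2} r * r * (\<integral>\<theta>. indicator {0<..2*pi} \<theta> * \<bar>\<rho> (r, \<theta>)\<bar> \<partial>lborel) \<partial>lborel)"
      unfolding S_def by (rule rect_formula) (use Ssub Sm intX(2)[OF Ssub Sm] in \<open>auto simp: S_def\<close>)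
    also have "\<dots> = (\<integral>r. indicator {r1<..r2} r * r * P \<partial>lborel)"
    proof (intro Bochner_Integration.integral_cong refl)
      fix r
      show "indicator {r1<..r2} r * r * (\<integral>\<theta>. indicator {0<..2*pi} \<theta> * \<bar>\<rho> (r, \<theta>)\<bar> \<partial>lborel) =
        indicator {r1<..r2} r * r * P"
      proof (cases "r \<in> {r1<..r2}")
        case True
        have "(\<integral>\<theta>. indicator {0<..2*pi} \<theta> * \<bar>\<rho> (r, \<theta>)\<bar> \<partial>lborel) =
           (\<integral>\<theta>. indicator {0<..2*pi} \<theta> * \<bar>g (\<theta> + 2*pi*t*r)\<bar> \<partial>lborel)"
          using rho_r[OF True] by simp
        also have "\<dots> = (LBINT \<theta>=0..2*pi. \<bar>g (\<theta> + 2*pi*t*r)\<bar>)"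
          by (subst Ioc_integral) (simp_all add: zero_ereal_def)
        also have "\<dots> = P" by (rule Pshift)
        finally show ?thesis by simp
      qed simp
    qed
    also have "\<dots> = P * D" by (rule intr)
    finally show ?thesis .
  qed
  have S_L: "(LINT p:S|disk_measure. L) = (L * (2*pi)) * D"
  proof -
    have "(LINT p:S|disk_measure. L) =
      (\<integral>r. indicator {r1<..r2} r * r * (\<integral>\<theta>. indicator {0<..2*pi} \<theta> * L \<partial>lborel) \<partial>lborel)"
      unfolding S_def by (rule rect_formula) (use Ssub Sm intX(3)[OF Ssub Sm] in \<open>auto simp: S_def\<close>)
    also have "(\<integral>\<theta>. indicator {0<..2*pi} \<theta> * L \<partial>lborel) = L * (2*pi)"
      using interval_integral_const(2)[of 0 "2*pi" L] by (subst Ioc_integral) (simp_all add: zero_ereal_def)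
    also have "(\<integral>r. indicator {r1<..r2} r * r * (L * (2*pi)) \<partial>lborel) = (L * (2*pi)) * D" by (rule intr)
    finally show ?thesis .
  qed
  have S_le: "(LINT p:S|disk_measure. \<bar>\<rho> p\<bar>) \<le> (LINT p:S|disk_measure. L)"
  proof (rule set_integral_mono_AE)
    show "set_integrable disk_measure S (\<lambda>p. \<bar>\<rho> p\<bar>)"
      using intX(2)[OF Ssub Sm] by (simp add: set_integrable_def)
    show "set_integrable disk_measure S (\<lambda>p. L)"
      using intX(3)[OF Ssub Sm] by (simp add: set_integrable_def)
    show "AE x\<in>S in disk_measure. \<bar>\<rho> x\<bar> \<le> L" using Lf unfolding \<rho>_def by auto
  qed
  have P_le: "P \<le> 2 * pi * L"
    using S_le D0 unfolding S_abs S_L by (simp add: mult_ac)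
  have P0: "0 \<le> P" unfolding P_def using interval_nonneg[of 0 "2*pi" "\<lambda>z. \<bar>g z\<bar>"] by (simp add: zero_ereal_def)
  have L0: "0 \<le> L"
  proof -
    have "0 \<le> (2 * pi) * L" using P_le P0 by linarith
    then show ?thesis using pi_gt_zero by (simp add: zero_le_mult_iff)
  qed
  define F where "F = Fint g"
  have Fc: "continuous_on UNIV F" unfolding F_def by (rule F_cont[OF gm gB gper gmean])
  have Fb: "\<And>x. \<bar>F x\<bar> \<le> P" unfolding F_def P_def by (rule F_bound[OF gm gB gper gmean])
  have h0: "h > 0" unfolding h_def by simp
  have Q_int: "(LINT p:Q|disk_measure. \<rho> p) = (LBINT r=r1..r2. r * (F (a + h + 2*pi*t*r) - F (a + 2*pi*t*r)))"
  proof -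
    have "(LINT p:Q|disk_measure. \<rho> p) =
      (\<integral>r. indicator {r1<..r2} r * r * (\<integral>\<theta>. indicator {a<..b} \<theta> * \<rho> (r, \<theta>) \<partial>lborel) \<partial>lborel)"
      unfolding Qeq by (rule rect_formula) (use Qsub Qm intX(1)[OF Qsub Qm] in \<open>auto simp: Qeq\<close>)
    also have "\<dots> = (\<integral>r. indicator {r1<..r2} r * (r * (F (a + h + 2*pi*t*r) - F (a + 2*pi*t*r))) \<partial>lborel)"
    proof (intro Bochner_Integration.integral_cong refl)
      fix r
      show "indicator {r1<..r2} r * r * (\<integral>\<theta>. indicator {a<..b} \<theta> * \<rho> (r, \<theta>) \<partial>lborel) =
        indicator {r1<..r2} r * (r * (F (a + h + 2*pi*t*r) - F (a + 2*pi*t*r)))"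
      proof (cases "r \<in> {r1<..r2}")
        case True
        have "(\<integral>\<theta>. indicator {a<..b} \<theta> * \<rho> (r, \<theta>) \<partial>lborel) =
           (\<integral>\<theta>. indicator {a<..b} \<theta> * g (\<theta> + 2*pi*t*r) \<partial>lborel)"
          using rho_r[OF True] by simp
        also have "\<dots> = (LBINT \<theta>=a..b. g (\<theta> + 2*pi*t*r))"
          by (rule Ioc_integral) (use ab in simp)
        also have "\<dots> = (LBINT \<theta>=a+2*pi*t*r..b+2*pi*t*r. g \<theta>)"
          by (rule shift_int) (use ab in simp)
        also have "\<dots> = F (b+2*pi*t*r) - F (a+2*pi*t*r)"
          unfolding F_def by (rule F_diff[OF gm gB gper gmean, symmetric])
        also have "\<dots> = F (a + h + 2*pi*t*r) - F (a + 2*pi*t*r)" using ab by simp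
        finally show ?thesis by simp
      qed simp
    qed
    also have "\<dots> = (LBINT r=r1..r2. r * (F (a + h + 2*pi*t*r) - F (a + 2*pi*t*r)))"
      by (rule Ioc_integral) (use r12 in simp)
    finally show ?thesis .
  qed
  have Q_bd: "\<bar>LINT p:Q|disk_measure. \<rho> p\<bar> \<le> 2*r2*h*P/(pi*t)"
    unfolding Q_int by (rule r_integral_bound[OF Fc Fb t r12(1)]) (use r12 h0 in auto)
  have Q_meas: "measure disk_measure Q = h * D"
  proof -
    have "measure disk_measure Q = integral\<^sup>L disk_measure (indicator Q)"
      by (simp add: space_disk)
    also have "\<dots> = (LINT p:Q|disk_measure. (1::real))"
      by (simp add: set_lebesgue_integral_def)
    also have "\<dots> = (\<integral>r. indicator {r1<..r2} r * r * (\<integral>\<theta>. indicator {a<..b} \<theta> * 1 \<partial>lborel) \<partial>lborel)"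
      unfolding Qeq by (rule rect_formula) (use Qsub Qm intX(3)[OF Qsub Qm, of 1] in \<open>auto simp: Qeq\<close>)
    also have "(\<integral>\<theta>. indicator {a<..b} \<theta> * 1 \<partial>lborel) = h"
      using interval_integral_const(2)[of a b 1] ab by (subst Ioc_integral) simp_all
    also have "(\<integral>r. indicator {r1<..r2} r * r * h \<partial>lborel) = h * D" by (rule intr)
    finally show ?thesis .
  qed
  have Dform: "D = (2 * real i + 1) / (2 * (2^M)^2)"
    unfolding D_def r1_def r2_def by (simp add: field_simps power2_eq_square)
  have r2D: "r2 \<le> 2 * 2^M * D"
    unfolding Dform r2_def by (simp add: field_simps power2_eq_square)
  have key0: "r2 * P \<le> (2 * 2^M * D) * (2 * pi * L)"
    by (rule mult_mono[OF r2D P_le]) (use D0 P0 in auto)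
  have key1: "2 * r2 * P / pi \<le> 8 * L * 2^M * D"
  proof -
    have "2 * r2 * P / pi \<le> 2 * ((2 * 2^M * D) * (2 * pi * L)) / pi"
      using key0 by (intro divide_right_mono) (auto simp: mult_ac)
    also have "\<dots> = 8 * L * 2^M * D" by (simp add: field_simps)
    finally show ?thesis .
  qed
  have key: "2*r2*h*P/(pi*t) \<le> 8*L*2^M*(h*D)/t"
  proof -
    have "2*r2*h*P/(pi*t) = (h/t) * (2 * r2 * P / pi)" by (simp add: field_simps)
    also have "\<dots> \<le> (h/t) * (8 * L * 2^M * D)"
      using key1 h0 t by (intro mult_left_mono) auto
    also have "\<dots> = 8*L*2^M*(h*D)/t" by (simp add: field_simps)
    finally show ?thesis .
  qed
  have hD: "h * D > 0" using h0 D0 by simp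
  have "\<bar>avg Q \<rho>\<bar> = \<bar>LINT p:Q|disk_measure. \<rho> p\<bar> / (h * D)"
    unfolding avg_def Q_meas using hD by (simp add: abs_divide)
  also have "\<dots> \<le> (8*L*2^M*(h*D)/t) / (h * D)"
    using Q_bd key hD by (intro divide_right_mono) auto
  also have "\<dots> = 8 * L * 2^M / t" using h0 D0 by (simp add: field_simps)
  finally show ?thesis using L0 unfolding Q_def \<rho>_def by simp
qed


lemma final_step:
  fixes N M i j :: nat and f :: "nat \<Rightarrow> real \<Rightarrow> real" and t c :: real
  assumes NM: "N < M" and i: "i < 2^M" and j: "j \<le> i" and t: "t > 0"
    and hf: "\<forall>l<2^N. f l \<in> borel_measurable lborel \<and>
               (\<exists>B. AE \<theta> in lborel. \<bar>f l \<theta>\<bar> \<le> B) \<and>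
               (\<forall>\<theta>. f l (\<theta> + 2*pi) = f l \<theta>) \<and>
               (LBINT \<theta>=0..2*pi. f l \<theta>) = 0"
    and c: "c > 0" "8 * 2^M / t \<le> c"
  shows "ereal \<bar>avg (Qcell M i j) (rho_sol N f t)\<bar> \<le> ereal c * Linf_disk (rho_sol N f t)"
proof -
  define E where "E = Linf_disk (rho_sol N f t)"
  have AE: "AE p in disk_measure. ereal \<bar>rho_sol N f t p\<bar> \<le> E"
    unfolding E_def Linf_disk_def by (rule esssup_AE)
  have "ereal \<bar>avg (Qcell M i j) (rho_sol N f t)\<bar> \<le> ereal c * E"
  proof (cases E)
    case (real L)
    have Lf: "AE p in disk_measure. \<bar>rho_sol N f t p\<bar> \<le> L" using AE unfolding real by simp
    from main_bound[OF NM i j t hf Lf] have L0: "0 \<le> L"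
      and b: "\<bar>avg (Qcell M i j) (rho_sol N f t)\<bar> \<le> 8 * L * 2^M / t" by auto
    have "8 * L * 2^M / t = (8 * 2^M / t) * L" by simp
    also have "\<dots> \<le> c * L" using c L0 by (intro mult_right_mono) auto
    finally show ?thesis using b unfolding real by simp
  next
    case PInf
    then show ?thesis using c by simp
  next
    case MInf
    have Lf: "AE p in disk_measure. \<bar>rho_sol N f t p\<bar> \<le> -1" using AE unfolding MInf by (simp add: eventually_mono)
    from main_bound[OF NM i j t hf Lf] show ?thesis by simp
  qed
  then show ?thesis by (simp add: E_def)
qed

theorem lemma2p6:
  shows "\<exists>C>0::real. \<forall>(N::nat) (\<kappa>::real) (f::nat \<Rightarrow> real \<Rightarrow> real).
    (0 < \<kappa> \<and> \<kappa> < 1 \<and>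
     (\<forall>l<2^N. f l \<in> borel_measurable lborel \<and>
               (\<exists>B. AE \<theta> in lborel. \<bar>f l \<theta>\<bar> \<le> B) \<and>
               (\<forall>\<theta>. f l (\<theta> + 2*pi) = f l \<theta>) \<and>
               (LBINT \<theta>=0..2*pi. f l \<theta>) = 0))
    \<longrightarrow> (\<forall>M>N. \<forall>Q\<in>QM M.
          (\<forall>t. t \<ge> C * 2^M / \<kappa> \<longrightarrow>
             ereal \<bar>avg Q (rho_sol N f t)\<bar> \<le> ereal (\<kappa>/4) * Linf_disk (rho_sol N f t)) \<and>
          (\<forall>t. t \<ge> C * 2^(2*M) \<longrightarrow>
             ereal \<bar>avg Q (rho_sol N f t)\<bar> \<le> ereal (2 powi (- int M)) * Linf_disk (rho_sol N f t)))"
proof (intro exI[of _ 32] conjI allI impI ballI)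
  show "(0::real) < 32" by simp
  fix N :: nat and \<kappa> :: real and f :: "nat \<Rightarrow> real \<Rightarrow> real" and M :: nat and Q
  assume H: "0 < \<kappa> \<and> \<kappa> < 1 \<and>
     (\<forall>l<2^N. f l \<in> borel_measurable lborel \<and>
               (\<exists>B. AE \<theta> in lborel. \<bar>f l \<theta>\<bar> \<le> B) \<and>
               (\<forall>\<theta>. f l (\<theta> + 2*pi) = f l \<theta>) \<and>
               (LBINT \<theta>=0..2*pi. f l \<theta>) = 0)"
    and NM: "N < M" and Q: "Q \<in> QM M"
  from Q obtain i j where Qij: "Q = Qcell M i j" and i: "i < 2^M" and j: "j \<le> i"
    unfolding QM_def by blast
  have k0: "0 < \<kappa>" using H by simp
  have hf: "\<forall>l<2^N. f l \<in> borel_measurable lborel \<and>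
               (\<exists>B. AE \<theta> in lborel. \<bar>f l \<theta>\<bar> \<le> B) \<and>
               (\<forall>\<theta>. f l (\<theta> + 2*pi) = f l \<theta>) \<and>
               (LBINT \<theta>=0..2*pi. f l \<theta>) = 0" using H by simp
  {
    fix t :: real assume tt: "t \<ge> 32 * 2^M / \<kappa>"
    have p: "0 < 32 * (2::real)^M / \<kappa>" using k0 by simp
    have t: "t > 0" using tt p by linarith
    have "32 * 2^M \<le> t * \<kappa>" using tt k0 by (simp add: field_simps)
    then have "8 * 2^M / t \<le> \<kappa> / 4" using t by (simp add: field_simps)
    then show "ereal \<bar>avg Q (rho_sol N f t)\<bar> \<le> ereal (\<kappa>/4) * Linf_disk (rho_sol N f t)"
      unfolding Qij by (intro final_step[OF NM i j t hf]) (use k0 in auto)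
  }
  {
    fix t :: real assume tt: "t \<ge> 32 * 2^(2*M)"
    have p: "0 < 32 * (2::real)^(2*M)" by simp
    have t: "t > 0" using tt p by linarith
    have e: "(2::real) powi (- int M) = 1 / 2^M"
      by (simp add: power_int_minus power_int_of_nat divide_inverse)
    have e2: "(2::real)^(2*M) = 2^M * 2^M" by (simp add: power_add[symmetric] mult_2)
    have X0: "0 \<le> (2::real)^M * 2^M" by simp
    have "32*((2::real)^M*2^M) \<le> t" using tt e2 by simp
    then have "8 * 2^M * 2^M \<le> t" using X0 by (simp only: mult.assoc)
    then have "8 * 2^M / t \<le> 1 / 2^M" using t by (simp add: field_simps)
    then show "ereal \<bar>avg Q (rho_sol N f t)\<bar> \<le> ereal (2 powi (- int M)) * Linf_disk (rho_sol N f t)"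
      unfolding Qij e by (intro final_step[OF NM i j t hf]) auto
  }
qed


end
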